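(* Let $g_n$ ($n\ge0$) denote the parity of the number of digits equal to $1$ in the negabinary representation of $n$, and for $k\ge0$ let $G_k$ be the finite word $g_0g_1\cdots g_{2^k-1}$ of the first $2^k$ terms. Then $G_0=0$, and: for every even $k\ge0$, $G_{k+1}=G_kF_k$ (concatenation), where $F_k$ is obtained from $G_k$ by replacing every letter $x$ by $1-x$; for every odd $k\ge1$, $G_{k+1}=G_kH_k$, where $H_k$ is obtained from $G_k$ by replacing each of its last $\frac{2}{3}(2^{k-1}-1)$ letters $x$ by $1-x$ and leaving the other letters unchanged.
   Context: Every nonnegative integer $n$ has a unique representation $n=\sum_{i\ge0} d_i(-2)^i$ with digits $d_i\in\{0,1\}$, only finitely many nonzero; this is the negabinary representation. Parity means the number modulo $2$, so $g_n\in\{0,1\}$. *)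

theory Defs
  imports Main
begin

definition negabinary :: "nat \<Rightarrow> nat list" where
  "negabinary n = (THE ds. set ds \<subseteq> {0, 1} \<and> (ds = [] \<or> last ds \<noteq> 0) \<and>
      int n = (\<Sum>i<length ds. int (ds ! i) * (-2) ^ i))"

definition g :: "nat \<Rightarrow> nat" where
  "g n = (count_list (negabinary n) 1) mod 2"

definition G :: "nat \<Rightarrow> nat list" where
  "G k = map g [0..<2 ^ k]"

end

theory Submission imports Defs begin

function nb :: "int \<Rightarrow> nat list" where
  "nb r = (if r = 0 then [] else nat (r mod 2) # nb (- (r div 2)))"
  by auto
termination
  apply (relation "measure (\<lambda>r. nat (2 * \<bar>r\<bar> - (if r > 0 then 1 else 0)))")
   apply auto
  apply presburger
  done

declare nb.simps[simp del]

fun val :: "nat list \<Rightarrow> int" where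
  "val [] = 0"
| "val (d # ds) = int d + (-2) * val ds"

lemma sum_val: "(\<Sum>i<length ds. int (ds ! i) * (-2) ^ i) = val ds"
proof (induction ds)
  case Nil then show ?case by simp
next
  case (Cons d ds)
  have "(\<Sum>i<length (d#ds). int ((d#ds) ! i) * (-2) ^ i)
       = (\<Sum>i<Suc (length ds). int ((d#ds) ! i) * (-2) ^ i)" by simp
  also have "\<dots> = int d + (\<Sum>i<length ds. int (ds ! i) * (-2) ^ (Suc i))"
    by (subst sum.lessThan_Suc_shift) simp
  also have "\<dots> = int d + (-2) * (\<Sum>i<length ds. int (ds ! i) * (-2) ^ i)"
    by (simp add: sum_distrib_left mult_ac)
  finally show ?case using Cons by simp
qed

definition ok :: "nat list \<Rightarrow> bool" where
  "ok ds \<longleftrightarrow> set ds \<subseteq> {0, 1} \<and> (ds = [] \<or> last ds \<noteq> 0)"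

lemma nb_nil: "nb r = [] \<longleftrightarrow> r = 0"
  by (subst nb.simps) auto

lemma nb_ok: "ok (nb r) \<and> val (nb r) = r"
proof (induction r rule: nb.induct)
  case (1 r)
  show ?case
  proof (cases "r = 0")
    case True then show ?thesis by (simp add: nb.simps ok_def)
  next
    case False
    have e: "nb r = nat (r mod 2) # nb (- (r div 2))" using False by (subst nb.simps) simp
    have ih: "ok (nb (- (r div 2)))" "val (nb (- (r div 2))) = - (r div 2)" using 1 False by auto
    have m: "r mod 2 = 0 \<or> r mod 2 = 1" by auto
    have "ok (nb r)"
    proof (cases "nb (- (r div 2)) = []")
      case True
      then have "r div 2 = 0" using nb_nil by simp
      then have "r = 1" using False by auto
      then show ?thesis using e True by (simp add: ok_def)
    next
      case False
      then show ?thesis using e ih m by (auto simp: ok_def)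
    qed
    moreover have "val (nb r) = r" using e ih m by auto
    ultimately show ?thesis by simp
  qed
qed

lemma dig_eq: fixes d e :: nat and a b :: int
  assumes "d = 0 \<or> d = 1" "e = 0 \<or> e = 1" "int d + (-2) * a = int e + (-2) * b"
  shows "d = e \<and> a = b"
proof -
  have "d = e" using assms by (elim disjE) presburger+
  then show ?thesis using assms(3) by simp
qed

lemma ok_tl: "ok (x # xs) \<Longrightarrow> ok xs \<and> (x = 0 \<or> x = 1)"
  unfolding ok_def by (cases xs) auto

lemma ok_zero: "ok (0 # xs) \<Longrightarrow> xs \<noteq> []"
  unfolding ok_def by auto

lemma ok_nil: "ok []" unfolding ok_def by simp

lemma val_unique: "ok xs \<Longrightarrow> ok ys \<Longrightarrow> val xs = val ys \<Longrightarrow> xs = ys"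
proof (induction xs arbitrary: ys)
  case Nil
  then show ?case
  proof (induction ys)
    case Nil then show ?case by simp
  next
    case (Cons y ys)
    have o: "ok ys" "y = 0 \<or> y = 1" using ok_tl[OF Cons.prems(2)] by auto
    have "int y + (-2) * val ys = int 0 + (-2) * 0" using Cons.prems by simp
    from dig_eq[OF o(2) _ this] have "y = 0" "val ys = 0" by auto
    then have "ys = []" using Cons.IH o ok_nil by simp
    then show ?case using ok_zero[of ys] Cons.prems \<open>y = 0\<close> by simp
  qed
next
  case (Cons x xs)
  have o: "ok xs" "x = 0 \<or> x = 1" using ok_tl[OF Cons.prems(1)] by auto
  show ?case
  proof (cases ys)
    case Nil
    have "int x + (-2) * val xs = int 0 + (-2) * val []" using Cons.prems Nil by simp
    from dig_eq[OF o(2) _ this] have "x = 0" "val xs = val []" by auto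
    then have "xs = []" using Cons.IH[of "[]"] o ok_nil by simp
    then show ?thesis using ok_zero[of xs] Cons.prems \<open>x = 0\<close> by simp
  next
    case (Cons y ys')
    have o2: "ok ys'" "y = 0 \<or> y = 1" using ok_tl[of y ys'] Cons.prems(2) \<open>ys = y # ys'\<close> by auto
    have "int x + (-2) * val xs = int y + (-2) * val ys'" using Cons.prems \<open>ys = y # ys'\<close> by simp
    from dig_eq[OF o(2) o2(2) this] have "x = y" "val xs = val ys'" by auto
    then show ?thesis using Cons.IH[of ys'] o o2 \<open>ys = y # ys'\<close> by simp
  qed
qed

lemma negabinary_nb: "negabinary n = nb (int n)"
  unfolding negabinary_def
proof (rule the_equality)
  have o: "ok (nb (int n))" "val (nb (int n)) = int n" using nb_ok[of "int n"] by auto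
  then show "set (nb (int n)) \<subseteq> {0, 1} \<and> (nb (int n) = [] \<or> last (nb (int n)) \<noteq> 0) \<and>
      int n = (\<Sum>i<length (nb (int n)). int (nb (int n) ! i) * (-2) ^ i)"
    unfolding ok_def sum_val by simp
next
  fix ds assume a: "set ds \<subseteq> {0, 1} \<and> (ds = [] \<or> last ds \<noteq> 0) \<and>
      int n = (\<Sum>i<length ds. int (ds ! i) * (-2) ^ i)"
  have "ok ds" using a unfolding ok_def by blast
  moreover have "val ds = int n" using a unfolding sum_val by simp
  moreover have o: "ok (nb (int n))" "val (nb (int n)) = int n" using nb_ok[of "int n"] by auto
  ultimately show "ds = nb (int n)" using val_unique[of ds "nb (int n)"] by simp
qed

definition c :: "int \<Rightarrow> nat" where "c r = count_list (nb r) 1"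

lemma c_rec: "c r = (if r = 0 then 0 else nat (r mod 2) + c (- (r div 2)))"
proof -
  have "r mod 2 = 0 \<or> r mod 2 = 1" by auto
  then show ?thesis unfolding c_def by (subst nb.simps) auto
qed

lemma c0[simp]: "c 0 = 0" using c_rec[of 0] by simp

lemma g_c: "g n = c (int n) mod 2"
  by (simp add: g_def c_def negabinary_nb)

fun hi :: "nat \<Rightarrow> int" and lo :: "nat \<Rightarrow> int" where
  "hi 0 = 0" | "lo 0 = 0"
| "hi (Suc k) = 1 - 2 * lo k" | "lo (Suc k) = - 2 * hi k"

lemma hilo: "3 * hi k = (if even k then 2^k - 1 else 2^(k+1) - 1) \<and> lo k = hi k - 2^k + 1"
proof (induction k)
  case 0 then show ?case by simp
next
  case (Suc k)
  define p :: int where "p = 2^k"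
  have p2: "(2::int)^(Suc k) = 2 * p" "(2::int)^(Suc k + 1) = 4 * p" unfolding p_def by simp_all
  have e: "hi (Suc k) = 1 - 2 * lo k" "lo (Suc k) = - 2 * hi k" by simp_all
  show ?case
  proof (cases "even k")
    case True
    then have h: "3 * hi k = p - 1" "lo k = hi k - p + 1" using Suc unfolding p_def by auto
    show ?thesis unfolding e p2 using True h by simp
  next
    case False
    then have h: "3 * hi k = 2 * p - 1" "lo k = hi k - p + 1" using Suc unfolding p_def by auto
    show ?thesis unfolding e p2 using False h by simp
  qed
qed

lemma c_step: "d = 0 \<or> d = 1 \<Longrightarrow> c (d + (-2) * x) = nat d + c x"
proof (cases "d + (-2) * x = 0")
  case True
  assume "d = 0 \<or> d = 1"
  then have "d = 0" "x = 0" using True by presburger+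
  then show ?thesis by simp
next
  case False
  assume d: "d = 0 \<or> d = 1"
  have "(d + (-2) * x) mod 2 = d \<and> - ((d + (-2) * x) div 2) = x"
  proof (cases "d = 0")
    case True then show ?thesis by simp
  next
    case False
    then have "d = 1" using d by simp
    moreover have "(1 + (-2) * x) div 2 = - x" "(1 + (-2) * x) mod 2 = 1" by presburger+
    ultimately show ?thesis by simp
  qed
  then show ?thesis using False c_rec[of "d + (-2) * x"] by simp
qed

lemma A: "lo k \<le> r \<Longrightarrow> r \<le> hi k \<Longrightarrow> c (r + (-2)^k) = c r + 1"
proof (induction k arbitrary: r)
  case 0
  have "c (1 + (-2) * 0) = nat 1 + c 0" by (rule c_step) simp
  then show ?case using 0 by simp
next
  case (Suc k)
  define d where "d = r mod 2"
  define r' where "r' = - (r div 2)"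
  have rr: "r = d + (-2) * r'" unfolding d_def r'_def by simp
  have d: "d = 0 \<or> d = 1" unfolding d_def by auto
  have p: "- 2 * hi k \<le> d + (-2) * r'" "d + (-2) * r' \<le> 1 - 2 * lo k" using Suc.prems rr by simp_all
  have b: "lo k \<le> r'" "r' \<le> hi k" using p d by presburger+
  have s: "r + (-2)^Suc k = d + (-2) * (r' + (-2)^k)" using rr by simp
  have "c (r + (-2)^Suc k) = nat d + c (r' + (-2)^k)" unfolding s using d by (rule c_step)
  also have "\<dots> = nat d + c r' + 1" using Suc.IH b by simp
  also have "\<dots> = c r + 1" unfolding rr using c_step[OF d] by simp
  finally show ?case .
qed
definition R :: "nat \<Rightarrow> int \<Rightarrow> bool" where "R k r \<longleftrightarrow> lo k \<le> r \<and> r \<le> hi k"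

declare hi.simps[simp del] lo.simps[simp del]

lemma hl: "p = (2::int)^k \<Longrightarrow>
  (if even k then 3 * hi k = p - 1 \<and> 3 * hi (Suc k) = 4 * p - 1
   else 3 * hi k = 2 * p - 1 \<and> 3 * hi (Suc k) = 2 * p - 1)
  \<and> lo k = hi k - p + 1 \<and> lo (Suc k) = hi (Suc k) - 2 * p + 1"
proof -
  assume p: "p = (2::int)^k"
  have p2: "(2::int)^(k+1) = 2 * p" "(2::int)^(Suc k) = 2 * p" "(2::int)^(Suc k + 1) = 4 * p"
    unfolding p by simp_all
  have h1: "3 * hi k = (if even k then p - 1 else 2 * p - 1)" "lo k = hi k - p + 1"
    using hilo[of k] unfolding p2 p[symmetric] by auto
  have h2: "3 * hi (Suc k) = (if even k then 4 * p - 1 else 2 * p - 1)" "lo (Suc k) = hi (Suc k) - 2 * p + 1"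
    using hilo[of "Suc k"] unfolding p2 by auto
  show ?thesis using h1 h2 by (cases "even k") simp_all
qed

lemma R_sub: "R k r \<Longrightarrow> R (Suc k) r"
proof -
  assume "R k r"
  then have r: "lo k \<le> r" "r \<le> hi k" unfolding R_def by auto
  define p :: int where "p = 2^k"
  have h: "(if even k then 3 * hi k = p - 1 \<and> 3 * hi (Suc k) = 4 * p - 1
   else 3 * hi k = 2 * p - 1 \<and> 3 * hi (Suc k) = 2 * p - 1)
  \<and> lo k = hi k - p + 1 \<and> lo (Suc k) = hi (Suc k) - 2 * p + 1"
    by (rule hl) (simp add: p_def)
  have p0: "0 < p" unfolding p_def by simp
  have L: "lo k = hi k - p + 1" "lo (Suc k) = hi (Suc k) - 2 * p + 1" using h by blast+
  show ?thesis
  proof (cases "even k")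
    case True
    then have "3 * hi k = p - 1" "3 * hi (Suc k) = 4 * p - 1" using h by auto
    then show ?thesis unfolding R_def using r L p0 by linarith
  next
    case False
    then have "3 * hi k = 2 * p - 1" "3 * hi (Suc k) = 2 * p - 1" using h by auto
    then show ?thesis unfolding R_def using r L p0 by linarith
  qed
qed

lemma R_shift: "R k r \<Longrightarrow> R (Suc k) (r + (-2)^k)"
proof -
  assume Rk: "R k r"
  define p :: int where "p = 2^k"
  have h: "(if even k then 3 * hi k = p - 1 \<and> 3 * hi (Suc k) = 4 * p - 1
   else 3 * hi k = 2 * p - 1 \<and> 3 * hi (Suc k) = 2 * p - 1)
  \<and> lo k = hi k - p + 1 \<and> lo (Suc k) = hi (Suc k) - 2 * p + 1"
    using hl[of p k] unfolding p_def by simp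
  have r: "lo k \<le> r" "r \<le> hi k" using Rk unfolding R_def by auto
  show ?thesis
  proof (cases "even k")
    case True
    then have e: "((-2)::int)^k = p" unfolding p_def by simp
    from True h have "3 * hi k = p - 1" "3 * hi (Suc k) = 4 * p - 1" "lo k = hi k - p + 1"
      "lo (Suc k) = hi (Suc k) - 2 * p + 1" by simp_all
    then show ?thesis unfolding R_def e using r by linarith
  next
    case False
    then have e: "((-2)::int)^k = - p" unfolding p_def by simp
    from False h have "3 * hi k = 2 * p - 1" "3 * hi (Suc k) = 2 * p - 1" "lo k = hi k - p + 1"
      "lo (Suc k) = hi (Suc k) - 2 * p + 1" by simp_all
    then show ?thesis unfolding R_def e using r by linarith
  qed
qed

lemma R_basic0: "hi k < 2^k \<and> 0 \<le> hi k \<and> lo k = hi k - 2^k + 1"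
proof -
  define p :: int where "p = 2^k"
  have h: "(if even k then 3 * hi k = p - 1 \<and> 3 * hi (Suc k) = 4 * p - 1
   else 3 * hi k = 2 * p - 1 \<and> 3 * hi (Suc k) = 2 * p - 1)
  \<and> lo k = hi k - p + 1 \<and> lo (Suc k) = hi (Suc k) - 2 * p + 1"
    by (rule hl) (simp add: p_def)
  have p0: "0 < p" unfolding p_def by simp
  have L: "lo k = hi k - p + 1" using h by blast
  have "hi k < p \<and> 0 \<le> hi k \<and> lo k = hi k - p + 1"
  proof (cases "even k")
    case True
    then have "3 * hi k = p - 1" using h by auto
    then show ?thesis using L p0 by linarith
  next
    case False
    then have "3 * hi k = 2 * p - 1" using h by auto
    then show ?thesis using L p0 by linarith
  qed
  then show ?thesis unfolding p_def .
qed

lemma R_basic: "0 \<le> r \<Longrightarrow> r \<le> hi k \<Longrightarrow> R k r"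
  "r < 0 \<Longrightarrow> lo k \<le> r \<Longrightarrow> R k r"
  "hi k < 2^k" "0 \<le> hi k"
  using R_basic0[of k] unfolding R_def by linarith+

lemma AR: "R k r \<Longrightarrow> c (r + (-2)^k) = c r + 1"
  using A unfolding R_def by blast

lemma even_case:
  assumes k: "even k" and n: "n < 2^k"
  shows "odd (c (int n + 2^k) + c (int n))"
proof -
  define x where "x = int n"
  define p :: int where "p = 2^k"
  have e: "((-2)::int)^k = p" "((-2)::int)^(Suc k) = - 2 * p" "((-2)::int)^(Suc (Suc k)) = 4 * p"
    using k unfolding p_def by simp_all
  have x: "0 \<le> x" "x < p" using n unfolding x_def p_def by (simp_all add: of_nat_less_iff[symmetric])
  have L: "lo k = hi k - p + 1" using R_basic0[of k] unfolding p_def by simp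
  show ?thesis
  proof (cases "x \<le> hi k")
    case True
    then have "R k x" using x R_basic by simp
    from AR[OF this] show ?thesis unfolding e x_def[symmetric] p_def[symmetric] by simp
  next
    case False
    define r where "r = x - p"
    have Rr: "R k r" using R_basic(2)[of r k] False x L unfolding r_def by simp
    have cx: "c x = c r + 1" using AR[OF Rr] unfolding e r_def by simp
    have R1: "R (Suc k) r" using R_sub[OF Rr] .
    have c1: "c (r + (-2)^Suc k) = c r + 1" using AR[OF R1] .
    have R2: "R (Suc (Suc k)) (r + (-2)^Suc k)" using R_shift[OF R1] .
    have c2: "c (r + (-2)^Suc k + (-2)^Suc (Suc k)) = c r + 2" using AR[OF R2] c1 by simp
    have "x + p = r + (-2)^Suc k + (-2)^Suc (Suc k)" unfolding e r_def by simp
    then have "c (x + p) = c r + 2" using c2 by simp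
    then show ?thesis using cx unfolding x_def p_def by simp
  qed
qed

lemma odd_case:
  assumes k: "odd k" and n: "n < 2^k"
  shows "c (int n + 2^k) + c (int n) = (if int n \<le> hi k then 2 * c (int n) + 2 else 2 * c (int n - 2^k) + 3)"
proof -
  define x where "x = int n"
  define p :: int where "p = 2^k"
  have e: "((-2)::int)^k = - p" "((-2)::int)^(Suc k) = 2 * p"
    using k unfolding p_def by simp_all
  have x: "0 \<le> x" "x < p" using n unfolding x_def p_def by (simp_all add: of_nat_less_iff[symmetric])
  have L: "lo k = hi k - p + 1" using R_basic0[of k] unfolding p_def by simp
  show ?thesis
  proof (cases "x \<le> hi k")
    case True
    then have Rx: "R k x" using x R_basic by simp
    have c1: "c (x + (-2)^k) = c x + 1" using AR[OF Rx] .
    have R2: "R (Suc k) (x + (-2)^k)" using R_shift[OF Rx] .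
    have c2: "c (x + (-2)^k + (-2)^Suc k) = c x + 2" using AR[OF R2] c1 by simp
    have "x + p = x + (-2)^k + (-2)^Suc k" unfolding e by simp
    then show ?thesis using c2 True unfolding x_def[symmetric] p_def[symmetric] by simp
  next
    case False
    define r where "r = x - p"
    have Rr: "R k r" using R_basic(2)[of r k] False x L unfolding r_def by simp
    have c1: "c (r + (-2)^k) = c r + 1" using AR[OF Rr] .
    have R2: "R (Suc k) (r + (-2)^k)" using R_shift[OF Rr] .
    have c2: "c (r + (-2)^k + (-2)^Suc k) = c r + 2" using AR[OF R2] c1 by simp
    have "x = r + (-2)^k + (-2)^Suc k" unfolding e r_def by simp
    then have cx: "c x = c r + 2" using c2 by simp
    have c3: "c (r + (-2)^Suc k) = c r + 1" using AR[OF R_sub[OF Rr]] .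
    have "x + p = r + (-2)^Suc k" unfolding e r_def by simp
    then have "c (x + p) = c r + 1" using c3 by simp
    then show ?thesis using cx False unfolding x_def[symmetric] p_def[symmetric] r_def by simp
  qed
qed

lemma g_even: assumes "even k" "n < 2^k" shows "g (n + 2^k) = 1 - g n"
proof -
  have "odd (c (int n + 2^k) + c (int n))" using even_case[OF assms] .
  moreover have "int (n + 2^k) = int n + 2^k" by simp
  ultimately have "odd (c (int (n + 2^k)) + c (int n))" by simp
  then show ?thesis unfolding g_c by presburger
qed

lemma g_odd: assumes "odd k" "n < 2^k" shows "g (n + 2^k) = (if int n \<le> hi k then g n else 1 - g n)"
proof -
  have e: "c (int n + 2^k) + c (int n) = (if int n \<le> hi k then 2 * c (int n) + 2 else 2 * c (int n - 2^k) + 3)"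
    using odd_case[OF assms] .
  have "int (n + 2^k) = int n + 2^k" by simp
  then have e2: "c (int (n + 2^k)) + c (int n) = (if int n \<le> hi k then 2 * c (int n) + 2 else 2 * c (int n - 2^k) + 3)"
    using e by simp
  show ?thesis
  proof (cases "int n \<le> hi k")
    case True
    then have "even (c (int (n + 2^k)) + c (int n))" using e2 by simp
    then show ?thesis using True unfolding g_c by presburger
  next
    case False
    then have "odd (c (int (n + 2^k)) + c (int n))" using e2 by simp
    then show ?thesis using False unfolding g_c by presburger
  qed
qed

lemma thr: assumes "odd k" shows "int (2 ^ k - 2 * (2 ^ (k - 1) - 1) div 3) = hi k + 1"
  "2 * (2 ^ (k - 1) - 1) div 3 \<le> (2::nat) ^ k"
proof -
  obtain j where k: "k = 2 * j + 1" using assms oddE by blast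
  define t :: nat where "t = 4 ^ j"
  have t1: "t mod 3 = 1" unfolding t_def by (induction j) (auto simp: mod_mult_right_eq[symmetric])
  define u where "u = t div 3"
  have tu: "t = 3 * u + 1" using t1 unfolding u_def by presburger
  have pk1: "(2::nat) ^ (k - 1) = t" unfolding k t_def by (simp add: power_mult)
  have pk: "(2::nat) ^ k = 2 * t" unfolding k t_def by (simp add: power_mult)
  have pk2: "(2::int) ^ (k + 1) = 4 * int t" unfolding k t_def by (simp add: power_mult)
  have m: "2 * (2 ^ (k - 1) - 1) div 3 = 2 * u" unfolding pk1 tu by simp
  have h: "3 * hi k = 4 * int t - 1" using hilo[of k] assms pk2 by simp
  show "int (2 ^ k - 2 * (2 ^ (k - 1) - 1) div 3) = hi k + 1" unfolding m pk using h tu by simp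
  show "2 * (2 ^ (k - 1) - 1) div 3 \<le> (2::nat) ^ k" unfolding m pk using tu by simp
qed

lemma Gsplit: "G (Suc k) = G k @ map (\<lambda>n. g (n + 2^k)) [0..<2^k]"
proof -
  have "[0..<2 ^ Suc k] = [0..<2^k] @ [2^k..<2^k + 2^k]"
    using upt_add_eq_append[of 0 "2^k" "2^k"] by (simp add: mult_2)
  moreover have "map g [2^k..<2^k + 2^k] = map (\<lambda>n. g (n + 2^k)) [0..<2^k]"
    by (rule nth_equalityI) (auto simp: add.commute)
  ultimately show ?thesis unfolding G_def by simp
qed

theorem theorem4:
  shows "G 0 = [0] \<and>
    (\<forall>k. even k \<longrightarrow> G (k + 1) = G k @ map (\<lambda>x. 1 - x) (G k)) \<and>
    (\<forall>k. odd k \<longrightarrow>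
       G (k + 1) = G k @
         (let m = 2 * (2 ^ (k - 1) - 1) div 3
          in take (2 ^ k - m) (G k) @ map (\<lambda>x. 1 - x) (drop (2 ^ k - m) (G k))))"
proof (intro conjI allI impI)
  show "G 0 = [0]" by (simp add: G_def g_c)
next
  fix k :: nat assume k: "even k"
  have "map (\<lambda>n. g (n + 2^k)) [0..<2^k] = map (\<lambda>x. 1 - x) (G k)"
    unfolding G_def map_map by (rule map_cong) (auto simp: g_even[OF k])
  then show "G (k + 1) = G k @ map (\<lambda>x. 1 - x) (G k)" using Gsplit[of k] by simp
next
  fix k :: nat assume k: "odd k"
  define m :: nat where "m = 2 * (2 ^ (k - 1) - 1) div 3"
  define q :: nat where "q = 2 ^ k - m"
  have q: "int q = hi k + 1" "q \<le> 2 ^ k" using thr[OF k] unfolding q_def m_def by auto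
  have lG: "length (G k) = 2 ^ k" unfolding G_def by simp
  have "map (\<lambda>n. g (n + 2^k)) [0..<2^k] = take q (G k) @ map (\<lambda>x. 1 - x) (drop q (G k))"
  proof (rule nth_equalityI)
    show "length (map (\<lambda>n. g (n + 2^k)) [0..<2^k]) = length (take q (G k) @ map (\<lambda>x. 1 - x) (drop q (G k)))"
      using q lG by simp
  next
    fix i assume "i < length (map (\<lambda>n. g (n + 2^k)) [0..<2^k])"
    then have i: "i < 2^k" by simp
    have iff: "i < q \<longleftrightarrow> int i \<le> hi k" using q by linarith
    show "map (\<lambda>n. g (n + 2^k)) [0..<2^k] ! i = (take q (G k) @ map (\<lambda>x. 1 - x) (drop q (G k))) ! i"
      using i q lG iff g_odd[OF k i] by (auto simp: nth_append G_def)
  qed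
  then show "G (k + 1) = G k @
         (let m = 2 * (2 ^ (k - 1) - 1) div 3
          in take (2 ^ k - m) (G k) @ map (\<lambda>x. 1 - x) (drop (2 ^ k - m) (G k)))"
    using Gsplit[of k] unfolding q_def m_def Let_def by simp
qed

end
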